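(* Let $\phi:\mathbb{N}_0\to\mathbb{N}_0$ satisfy $\phi(0)=0$ and $\phi(x)\neq x$ for all $x\in\mathbb{N}$, and let $n\ge2$. If the local function $\phi_n$ has no cycle, then $M_n(\phi)^k\cap M_n(\phi)^l=0$ for all $k\ne l$ with $k,l\ge1$.
   Context: $\mathbb{N}=\{1,2,\dots\}$, $\mathbb{N}_0=\mathbb{N}\cup\{0\}$, $D_n=\{1,\dots,n\}$, $D_{n,0}=D_n\cup\{0\}$. The local function $\phi_n:D_{n,0}\to D_{n,0}$ is $\phi_n(x)=\phi(x)$ if $x\in D_n$ and $\phi(x)\in D_n$, and $\phi_n(x)=0$ otherwise. "$\phi_n$ has no cycle" means there are no $m\ge2$ and $x\in D_n$ with $\phi_n^m(x)=x$. For $1\le i\le n$, $\mathbf{e}_i$ is the $i$-th unit vector in $\mathbb{Z}^n$ and $\mathbf{e}_0$ the zero vector. $M_n(\phi)$ is the $n\times n$ matrix whose $j$-th column is $\mathbf{e}_{\phi_n(j)}$. For $n\times n$ matrices $A,B$, $A\cap B$ is the number of index pairs $(i,j)$ with $A_{ij}B_{ij}\neq0$. *)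

theory Defs
  imports "Jordan_Normal_Form.Matrix"
begin

definition local_fun :: "(nat \<Rightarrow> nat) \<Rightarrow> nat \<Rightarrow> nat \<Rightarrow> nat" where
  "local_fun \<phi> n x = (if 1 \<le> x \<and> x \<le> n \<and> 1 \<le> \<phi> x \<and> \<phi> x \<le> n then \<phi> x else 0)"

definition has_no_cycle :: "(nat \<Rightarrow> nat) \<Rightarrow> nat \<Rightarrow> bool" where
  "has_no_cycle \<phi> n \<longleftrightarrow>
     \<not> (\<exists>m x. m \<ge> 2 \<and> 1 \<le> x \<and> x \<le> n \<and> (local_fun \<phi> n ^^ m) x = x)"

text \<open>M_n(phi): n x n integer matrix whose j-th column is e_{phi_n(j)} (e_0 = zero vector).
  Jordan_Normal_Form matrices are 0-indexed, so paper entry (i,j) is stored at (i-1,j-1).\<close>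
definition M_mat :: "nat \<Rightarrow> (nat \<Rightarrow> nat) \<Rightarrow> int mat" where
  "M_mat n \<phi> = mat n n (\<lambda>(i, j). if local_fun \<phi> n (j + 1) = i + 1 then 1 else 0)"

definition mat_meet :: "int mat \<Rightarrow> int mat \<Rightarrow> nat" where
  "mat_meet A B = card {(i, j). i < dim_row A \<and> j < dim_col A \<and> A $$ (i, j) * B $$ (i, j) \<noteq> 0}"

end

theory Submission
  imports Defs
begin

lemma lf_zero: "local_fun \<phi> n 0 = 0"
  by (simp add: local_fun_def)

lemma lf_pow_zero: "(local_fun \<phi> n ^^ k) 0 = 0"
  by (induction k) (auto simp: lf_zero)

lemma lf_le: "local_fun \<phi> n x \<le> n"
  by (simp add: local_fun_def)

lemma lf_pow_le: "x \<le> n \<Longrightarrow> (local_fun \<phi> n ^^ k) x \<le> n"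
  by (induction k) (auto simp: lf_le)

lemma M_dims[simp]: "dim_row (M_mat n \<phi>) = n" "dim_col (M_mat n \<phi>) = n"
  by (auto simp: M_mat_def)

lemma dim_row_pow_mat: "dim_row (M_mat n \<phi> ^\<^sub>m k) = n" "dim_col (M_mat n \<phi> ^\<^sub>m k) = n"
  by (induction k) auto

lemma M_pow_entry:
  assumes "i < n" "j < n"
  shows "(M_mat n \<phi> ^\<^sub>m k) $$ (i, j) =
          (if (local_fun \<phi> n ^^ k) (j + 1) = i + 1 then 1 else 0)"
  using assms
proof (induction k arbitrary: i j)
  case 0
  then show ?case by auto
next
  case (Suc k)
  define f where "f = local_fun \<phi> n"
  have dims: "dim_row (M_mat n \<phi> ^\<^sub>m k) = n" "dim_col (M_mat n \<phi> ^\<^sub>m k) = n"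
    by (auto simp: M_mat_def)
  have "(M_mat n \<phi> ^\<^sub>m Suc k) $$ (i, j) =
        (\<Sum>l = 0..<n. (M_mat n \<phi> ^\<^sub>m k) $$ (i, l) * M_mat n \<phi> $$ (l, j))"
    using Suc.prems dims by (simp add: times_mat_def scalar_prod_def row_def col_def)
  also have "\<dots> = (\<Sum>l = 0..<n. (if (f ^^ k) (l + 1) = i + 1 then 1 else 0) *
        (if f (j + 1) = l + 1 then 1 else 0))"
    using Suc by (intro sum.cong) (auto simp: M_mat_def f_def)
  also have "\<dots> = (\<Sum>l = 0..<n. if l = f (j+1) - 1 \<and> f (j+1) \<ge> 1 then
        (if (f ^^ k) (f (j+1)) = i + 1 then 1 else 0) else 0)"
    by (intro sum.cong) auto
  also have "\<dots> = (if f (j+1) \<ge> 1 then (if (f ^^ k) (f (j+1)) = i + 1 then 1 else 0) else 0)"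
  proof (cases "f (j+1) \<ge> 1")
    case True
    have "f (j+1) - 1 < n" using lf_le[of \<phi> n "j+1"] True by (simp add: f_def)
    then show ?thesis using True by (simp add: sum.delta')
  next
    case False then show ?thesis by simp
  qed
  also have "\<dots> = (if (f ^^ Suc k) (j + 1) = i + 1 then 1 else 0)"
  proof -
    have fs: "(f ^^ Suc k) (j+1) = (f ^^ k) (f (j+1))" by (simp only: funpow_Suc_right o_apply)
    have z: "(f ^^ k) 0 = 0" using lf_pow_zero[where \<phi>=\<phi> and n=n and k=k] by (simp add: f_def)
    show ?thesis
    proof (cases "f (j+1) \<ge> 1")
      case True then show ?thesis by (simp only: fs) simp
    next
      case False then have "f (j+1) = 0" by simp
      then show ?thesis using z fs by simp
    qed
  qed
  finally show ?case by (simp add: f_def)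
qed

theorem proposition3p5:
  fixes \<phi> :: "nat \<Rightarrow> nat" and n :: nat
  assumes "\<phi> 0 = 0"
    and "\<And>x. x \<ge> 1 \<Longrightarrow> \<phi> x \<noteq> x"
    and "n \<ge> 2"
    and "has_no_cycle \<phi> n"
  shows "\<forall>k l. k \<ge> 1 \<longrightarrow> l \<ge> 1 \<longrightarrow> k \<noteq> l \<longrightarrow>
           mat_meet (M_mat n \<phi> ^\<^sub>m k) (M_mat n \<phi> ^\<^sub>m l) = 0"
proof (intro allI impI)
  fix k l :: nat
  assume "k \<ge> 1" "l \<ge> 1" "k \<noteq> l"
  define f where "f = local_fun \<phi> n"
  have key: False if "k < l" "x \<ge> 1" "x \<le> n" "(f ^^ k) x = y" "(f ^^ l) x = y" "y \<ge> 1"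
    for k l x y
  proof -
    have yn: "y \<le> n" using lf_pow_le[where x=x and n=n and \<phi>=\<phi> and k=k] that by (simp add: f_def)
    have "(f ^^ (l - k)) y = y"
      using that by (metis funpow_add le_less o_apply le_add_diff_inverse2)
    moreover have "l - k \<ge> 2 \<or> l - k = 1" using that by auto
    ultimately show False
    proof (elim conjE disjE)
      assume "(f ^^ (l - k)) y = y" "l - k \<ge> 2"
      then show False using assms(4) yn that(6) unfolding has_no_cycle_def f_def by blast
    next
      assume "(f ^^ (l - k)) y = y" "l - k = 1"
      then have "f y = y" by simp
      then show False using assms(2)[of y] that(6) by (auto simp: f_def local_fun_def split: if_splits)
    qed
  qed
  have "{(i, j). i < dim_row (M_mat n \<phi> ^\<^sub>m k) \<and> j < dim_col (M_mat n \<phi> ^\<^sub>m k) \<and>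
      (M_mat n \<phi> ^\<^sub>m k) $$ (i, j) * (M_mat n \<phi> ^\<^sub>m l) $$ (i, j) \<noteq> 0} = {}"
  proof (rule ccontr)
    assume "\<not> ?thesis"
    then obtain i j where ij: "i < n" "j < n"
      "(M_mat n \<phi> ^\<^sub>m k) $$ (i, j) * (M_mat n \<phi> ^\<^sub>m l) $$ (i, j) \<noteq> 0"
      using dim_row_pow_mat[of n \<phi> k] by (auto split: if_splits)
    then have e: "(f ^^ k) (j+1) = i + 1" "(f ^^ l) (j+1) = i + 1"
      by (auto simp: M_pow_entry f_def split: if_splits)
    show False
    proof (cases "k < l")
      case True then show ?thesis using key[OF True _ _ e] ij by simp
    next
      case False then have "l < k" using \<open>k \<noteq> l\<close> by simp
      then show ?thesis using key[OF \<open>l < k\<close> _ _ e(2) e(1)] ij by simp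
    qed
  qed
  then show "mat_meet (M_mat n \<phi> ^\<^sub>m k) (M_mat n \<phi> ^\<^sub>m l) = 0"
    unfolding mat_meet_def by (simp only: card.empty)
qed

end
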